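(* Let $V=\{1,\dots,n\}$ and let $W=(w_1,\dots,w_m)\in V^m$ be a sequence such that each element of $V$ appears in $W$ at least once and any three consecutive elements of $W$ are distinct. Then the set of 3-cycles $\mathcal{C}=\{(w_{i-1}\ w_i\ w_{i+1}) : 1<i<m\}$ can generate any even permutation of $V$ in $O(n^3)$ shifts; that is, there is an absolute constant $K$ (independent of $m$ and $W$) such that every even permutation of $V$ is a product of at most $Kn^3$ factors, each being an element of $\mathcal{C}$ or the inverse of one.
   Context: Permutations are written in cycle notation; $(x\ y\ z)$ denotes the 3-cycle sending $x\mapsto y\mapsto z\mapsto x$. *)

theory Defs
  imports "HOL-Combinatorics.Combinatorics"
begin

text \<open>The 3-cycle (x y z): x \<mapsto> y \<mapsto> z \<mapsto> x.\<close>
definition cyc3 :: "nat \<Rightarrow> nat \<Rightarrow> nat \<Rightarrow> (nat \<Rightarrow> nat)" where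
  "cyc3 x y z = cycle_of_list [x, y, z]"

text \<open>Generating set C = {(w_{i-1} w_i w_{i+1}) : 1 < i < m}; the list W is 0-indexed,
  so paper index i corresponds to list position i - 1.\<close>
definition gens :: "nat list \<Rightarrow> (nat \<Rightarrow> nat) set" where
  "gens W = {cyc3 (W ! (i - 1)) (W ! i) (W ! (i + 1)) | i. 0 < i \<and> i + 1 < length W}"

end

theory Submission
  imports Defs
begin

definition gen_or_inv :: "nat list \<Rightarrow> (nat \<Rightarrow> nat) \<Rightarrow> bool" where
  "gen_or_inv W f \<longleftrightarrow> f \<in> gens W \<or> (\<exists>c\<in>gens W. f = inv c)"

lemma foldr_comp: "foldr (\<circ>) xs g = foldr (\<circ>) xs id \<circ> g"
  by (induction xs) auto

lemma bij_foldr: "(\<forall>f\<in>set fs. bij f) \<Longrightarrow> bij (foldr (\<circ>) fs id)"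
  by (induction fs) (auto intro: bij_comp)

lemma inv_foldr: "(\<forall>f\<in>set fs. bij f) \<Longrightarrow> inv (foldr (\<circ>) fs id) = foldr (\<circ>) (rev (map inv fs)) id"
proof (induction fs)
  case Nil
  then show ?case by simp
next
  case (Cons f fs)
  have "inv (foldr (\<circ>) (f # fs) id) = inv (foldr (\<circ>) fs id) \<circ> inv f"
    using Cons.prems bij_foldr[of fs] by (simp add: o_inv_distrib)
  also have "\<dots> = foldr (\<circ>) (rev (map inv fs)) id \<circ> inv f"
  proof -
    have "\<forall>f\<in>set fs. bij f" using Cons.prems by simp
    from Cons.IH[OF this] show ?thesis by (rule arg_cong[where f="\<lambda>x. x \<circ> inv f"])
  qed
  also have "\<dots> = foldr (\<circ>) (rev (map inv (f # fs))) id"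
    by (simp add: foldr_comp[of _ "inv f"])
  finally show ?case .
qed

lemma permutes_foldr: "(\<forall>f\<in>set fs. f permutes S) \<Longrightarrow> foldr (\<circ>) fs id permutes S"
  by (induction fs) (auto intro: permutes_compose permutes_id)

lemma even_foldr: "(\<forall>f\<in>set fs. permutation f \<and> evenperm f) \<Longrightarrow>
   permutation (foldr (\<circ>) fs id) \<and> evenperm (foldr (\<circ>) fs id)"
  by (induction fs) (auto simp: evenperm_comp permutation_compose)

lemma cyc3_props:
  assumes "distinct [a, b, c]"
  shows "cyc3 a b c permutes {a, b, c}" "permutation (cyc3 a b c)" "evenperm (cyc3 a b c)"
    "bij (cyc3 a b c)" "cyc3 a b c c = a"
proof -
  show "cyc3 a b c permutes {a, b, c}" unfolding cyc3_def using cycle_permutes[of "[a,b,c]"] by simp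
  show p: "permutation (cyc3 a b c)" unfolding cyc3_def by (rule permutation_of_cycle)
  show "evenperm (cyc3 a b c)" unfolding cyc3_def using assms
    by (simp add: evenperm_comp permutation_swap_id evenperm_swap)
  show "bij (cyc3 a b c)" using p by (simp add: permutation_bijective)
  show "cyc3 a b c c = a" unfolding cyc3_def using assms by (auto simp: transpose_def)
qed

lemma gens_props:
  assumes H: "\<forall>i. i + 2 < length W \<longrightarrow> distinct [W ! i, W ! (i + 1), W ! (i + 2)]"
    and f: "f \<in> gens W"
  shows "permutation f" "evenperm f" "bij f"
proof -
  obtain i where i: "f = cyc3 (W ! (i - 1)) (W ! i) (W ! (i + 1))" "0 < i" "i + 1 < length W"
    using f unfolding gens_def by blast
  have "distinct [W ! (i - 1), W ! i, W ! (i + 1)]"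
    using H[rule_format, of "i - 1"] i by (simp add: Suc_diff_Suc numeral_2_eq_2)
  then show "permutation f" "evenperm f" "bij f" using cyc3_props i(1) by auto
qed

lemma nth_in_take: "i < k \<Longrightarrow> i < length W \<Longrightarrow> W ! i \<in> set (take k W)"
  by (metis in_set_conv_nth length_take min_less_iff_conj nth_take)

lemma gen_at:
  assumes H: "\<forall>i. i + 2 < length W \<longrightarrow> distinct [W ! i, W ! (i + 1), W ! (i + 2)]"
    and "2 \<le> k" "k < length W"
  shows "cyc3 (W ! (k - 2)) (W ! (k - 1)) (W ! k) \<in> gens W"
    "distinct [W ! (k - 2), W ! (k - 1), W ! k]"
proof -
  have e: "cyc3 (W ! (k - 2)) (W ! (k - 1)) (W ! k) = cyc3 (W ! ((k - 1) - 1)) (W ! (k - 1)) (W ! ((k - 1) + 1))"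
    using assms(2) by (simp add: numeral_2_eq_2)
  show "cyc3 (W ! (k - 2)) (W ! (k - 1)) (W ! k) \<in> gens W"
    unfolding gens_def e using assms(2,3) by (intro CollectI exI[where x="k - 1"]) auto
  show "distinct [W ! (k - 2), W ! (k - 1), W ! k]"
    using H[rule_format, of "k - 2"] assms(2,3)
    by (simp add: numeral_2_eq_2 Suc_diff_Suc)
qed

lemma take_Suc_set: "k < length W \<Longrightarrow> set (take (Suc k) W) = insert (W ! k) (set (take k W))"
  by (simp add: take_Suc_conv_app_nth)

lemma reach:
  assumes H: "\<forall>i. i + 2 < length W \<longrightarrow> distinct [W ! i, W ! (i + 1), W ! (i + 2)]"
    and "3 \<le> k" "k \<le> length W"
  shows "\<forall>y\<in>set (take k W). \<exists>fs. length fs \<le> card (set (take k W)) \<and>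
     (\<forall>f\<in>set fs. f \<in> gens W \<and> f permutes set (take k W)) \<and> foldr (\<circ>) fs id y = W ! 0"
  using assms(2,3)
proof (induction k rule: nat_induct_at_least)
  case base
  have d: "distinct [W ! 0, W ! 1, W ! 2]" using H[rule_format, of 0] base by (simp add: numeral_2_eq_2)
  define g where "g = cyc3 (W ! 0) (W ! 1) (W ! 2)"
  have gg: "g \<in> gens W" using gen_at[OF H, of 2] base by (simp add: g_def)
  have t: "take 3 W = [W ! 0, W ! 1, W ! 2]" using base
    by (intro nth_equalityI) (auto simp: less_Suc_eq numeral_3_eq_3 numeral_2_eq_2)
  have S: "set (take 3 W) = {W ! 0, W ! 1, W ! 2}" by (simp add: t)
  have c: "card (set (take 3 W)) = 3" using d by (simp add: S)
  have gp: "g permutes set (take 3 W)" using cyc3_props[OF d] by (simp add: S g_def)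
  have v: "g (W ! 2) = W ! 0" "g (W ! 1) = W ! 2" using d by (auto simp: g_def cyc3_def transpose_def)
  show ?case
  proof
    fix y assume "y \<in> set (take 3 W)"
    then have "y = W ! 0 \<or> y = W ! 1 \<or> y = W ! 2" by (simp add: S)
    then show "\<exists>fs. length fs \<le> card (set (take 3 W)) \<and>
     (\<forall>f\<in>set fs. f \<in> gens W \<and> f permutes set (take 3 W)) \<and> foldr (\<circ>) fs id y = W ! 0"
    proof (elim disjE)
      assume "y = W ! 0" then show ?thesis by (intro exI[where x="[]"]) simp
    next
      assume "y = W ! 1" then show ?thesis using gg gp v c
        by (intro exI[where x="[g, g]"]) simp
    next
      assume "y = W ! 2" then show ?thesis using gg gp v c
        by (intro exI[where x="[g]"]) simp
    qed
  qed
next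
  case (Suc k)
  let ?S = "set (take k W)"
  let ?S' = "set (take (Suc k) W)"
  have kl: "k < length W" using Suc by simp
  have S': "?S' = insert (W ! k) ?S" using take_Suc_set[OF kl] .
  have fin: "finite ?S'" by simp
  have cm: "card ?S \<le> card ?S'" using S' by (intro card_mono) auto
  show ?case
  proof
    fix y assume y: "y \<in> ?S'"
    show "\<exists>fs. length fs \<le> card ?S' \<and> (\<forall>f\<in>set fs. f \<in> gens W \<and> f permutes ?S') \<and> foldr (\<circ>) fs id y = W ! 0"
    proof (cases "y \<in> ?S")
      case True
      then obtain fs where fs: "length fs \<le> card ?S" "\<forall>f\<in>set fs. f \<in> gens W \<and> f permutes ?S"
        "foldr (\<circ>) fs id y = W ! 0" using Suc.IH kl True by (meson less_imp_le)
      show ?thesis using fs cm S' by (intro exI[where x=fs]) (auto intro: permutes_subset)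
    next
      case False
      then have yk: "y = W ! k" using y S' by auto
      define a where "a = W ! (k - 2)"
      have aS: "a \<in> ?S" unfolding a_def using kl Suc.hyps by (intro nth_in_take) auto
      obtain fs where fs: "length fs \<le> card ?S" "\<forall>f\<in>set fs. f \<in> gens W \<and> f permutes ?S"
        "foldr (\<circ>) fs id a = W ! 0" using Suc.IH kl aS by (meson less_imp_le)
      define g where "g = cyc3 (W ! (k - 2)) (W ! (k - 1)) (W ! k)"
      have gg: "g \<in> gens W" and d: "distinct [W ! (k - 2), W ! (k - 1), W ! k]"
        using gen_at[OF H, of k] Suc.hyps kl by (auto simp: g_def)
      have b: "W ! (k - 1) \<in> ?S" using kl Suc.hyps by (intro nth_in_take) auto
      have gp: "g permutes ?S'" unfolding g_def
        using cyc3_props(1)[OF d] aS b S' by (elim permutes_subset) (auto simp: a_def)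
      have gv: "g y = a" using cyc3_props(5)[OF d] by (simp add: g_def yk a_def)
      have cS: "card ?S' = Suc (card ?S)" using S' False yk by simp
      have "foldr (\<circ>) (fs @ [g]) id y = foldr (\<circ>) fs id (g y)"
        by (simp add: foldr_comp[of fs g])
      then show ?thesis using fs gv gg gp cS cm S'
        by (intro exI[where x="fs @ [g]"]) (auto intro: permutes_subset)
    qed
  qed
qed

lemma main:
  assumes H: "\<forall>i. i + 2 < length W \<longrightarrow> distinct [W ! i, W ! (i + 1), W ! (i + 2)]"
    and "k \<le> length W"
  shows "\<forall>p. p permutes set (take k W) \<longrightarrow> evenperm p \<longrightarrow>
    (\<exists>fs. length fs \<le> 3 * card (set (take k W)) ^ 2 \<and> (\<forall>f\<in>set fs. gen_or_inv W f) \<and>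
       p = foldr (\<circ>) fs id)"
  using assms(2)
proof (induction k)
  case 0
  show ?case
  proof (intro allI impI)
    fix p :: "nat \<Rightarrow> nat" assume "p permutes set (take 0 W)"
    then have "p = id" by simp
    then show "\<exists>fs. length fs \<le> 3 * card (set (take 0 W)) ^ 2 \<and> (\<forall>f\<in>set fs. gen_or_inv W f) \<and>
       p = foldr (\<circ>) fs id" by (intro exI[where x="[]"]) simp
  qed
next
  case (Suc k)
  let ?S = "set (take k W)"
  let ?S' = "set (take (Suc k) W)"
  define v where "v = W ! k"
  have kl: "k < length W" using Suc by simp
  have S': "?S' = insert v ?S" using take_Suc_set[OF kl] by (simp add: v_def)
  have fin: "finite ?S'" by simp
  have cm: "card ?S \<le> card ?S'" using S' by (intro card_mono) auto
  have IH: "\<And>p. p permutes ?S \<Longrightarrow> evenperm p \<Longrightarrow>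
    (\<exists>fs. length fs \<le> 3 * card ?S ^ 2 \<and> (\<forall>f\<in>set fs. gen_or_inv W f) \<and> p = foldr (\<circ>) fs id)"
    using Suc.IH kl by (meson less_imp_le)
  show ?case
  proof (intro allI impI)
    fix p :: "nat \<Rightarrow> nat" assume pp: "p permutes ?S'" and pe: "evenperm p"
    show "\<exists>fs. length fs \<le> 3 * card ?S' ^ 2 \<and> (\<forall>f\<in>set fs. gen_or_inv W f) \<and> p = foldr (\<circ>) fs id"
    proof (cases "v \<in> ?S")
      case True
      then have "?S' = ?S" using S' by auto
      then show ?thesis using IH pp pe by simp
    next
      case vS: False
      have cS: "card ?S' = Suc (card ?S)" using S' vS by simp
      have sq: "3 * card ?S ^ 2 \<le> 3 * card ?S' ^ 2" using cm by (simp add: power_mono)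
      show ?thesis
      proof (cases "p v = v")
        case True
        have "p permutes ?S" using pp True S' by (elim permutes_superset) auto
        then obtain fs where fs: "length fs \<le> 3 * card ?S ^ 2" "\<forall>f\<in>set fs. gen_or_inv W f" "p = foldr (\<circ>) fs id"
          using IH pe by blast
        have "length fs \<le> 3 * card ?S' ^ 2" using le_trans[OF fs(1) sq] .
        then show ?thesis using fs by blast
      next
        case pv: False
        have pvS: "p v \<in> ?S'" using pp S' permutes_in_image[OF pp, of v] by simp
        have k2: "2 \<le> k"
        proof (rule ccontr)
          assume "\<not> 2 \<le> k"
          then have "k = 0 \<or> k = 1" by auto
          then show False
          proof
            assume "k = 0"
            then have "?S' = {v}" using S' by simp
            then show False using pvS pv by simp
          next
            assume k1: "k = 1"
            have t1: "set (take 1 W) = {W ! 0}" using kl k1 by (cases W) auto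
            then have SS: "?S' = {W ! 0, v}" using S' k1 by auto
            have ne: "W ! 0 \<noteq> v" using vS k1 t1 by simp
            have p1: "p v = W ! 0" using pvS pv SS by auto
            have p0: "p (W ! 0) = v"
            proof -
              have "p (W ! 0) \<in> ?S'" using SS permutes_in_image[OF pp, of "W ! 0"] by simp
              moreover have "p (W ! 0) \<noteq> p v" using ne permutes_inj[OF pp] by (meson injD)
              ultimately show ?thesis using SS p1 by auto
            qed
            have "p = transpose (W ! 0) v"
            proof
              fix x show "p x = transpose (W ! 0) v x"
                using p0 p1 permutes_not_in[OF pp, of x] SS by (auto simp: transpose_def)
            qed
            then show False using pe ne by (simp add: evenperm_swap)
          qed
        qed
        have R: "\<forall>y\<in>?S'. \<exists>fs. length fs \<le> card ?S' \<and>
          (\<forall>f\<in>set fs. f \<in> gens W \<and> f permutes ?S') \<and> foldr (\<circ>) fs id y = W ! 0"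
          using reach[OF H, of "Suc k"] k2 kl by simp
        define a where "a = W ! (k - 2)"
        have aS: "a \<in> ?S'" unfolding a_def using kl k2 by (intro nth_in_take) auto
        obtain Py where Py: "length Py \<le> card ?S'" "\<forall>f\<in>set Py. f \<in> gens W \<and> f permutes ?S'"
          "foldr (\<circ>) Py id (p v) = W ! 0" using R pvS by blast
        obtain Pa where Pa: "length Pa \<le> card ?S'" "\<forall>f\<in>set Pa. f \<in> gens W \<and> f permutes ?S'"
          "foldr (\<circ>) Pa id a = W ! 0" using R aS by blast
        define g where "g = cyc3 (W ! (k - 2)) (W ! (k - 1)) (W ! k)"
        have gg: "g \<in> gens W" and d: "distinct [W ! (k - 2), W ! (k - 1), W ! k]"
          using gen_at[OF H, of k] k2 kl by (auto simp: g_def)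
        have b: "W ! (k - 1) \<in> ?S'" using kl k2 by (intro nth_in_take) auto
        have gp: "g permutes ?S'" unfolding g_def
          using cyc3_props(1)[OF d] aS b S' by (elim permutes_subset) (auto simp: a_def v_def)
        have gv: "g v = a" using cyc3_props(5)[OF d] by (simp add: g_def v_def a_def)
        have gb: "bij g" using gens_props[OF H gg] by simp
        define hs where "hs = inv g # rev (map inv Pa) @ Py"
        have gprop: "permutation f \<and> evenperm f \<and> bij f" if "f \<in> gens W" for f
          using gens_props[OF H that] by simp
        have hs_props: "\<forall>f\<in>set hs. bij f \<and> f permutes ?S' \<and> permutation f \<and> evenperm f"
          unfolding hs_def using Py(2) Pa(2) gprop gg gp
          by (auto simp: permutes_inv permutation_inverse evenperm_inv bij_imp_bij_inv)
        define h where "h = foldr (\<circ>) hs id"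
        have FPa: "bij (foldr (\<circ>) Pa id)" using Pa(2) gprop by (intro bij_foldr) auto
        have "h = inv g \<circ> (foldr (\<circ>) (rev (map inv Pa)) id \<circ> foldr (\<circ>) Py id)"
          unfolding h_def hs_def by (simp add: foldr_comp[of "rev (map inv Pa)" "foldr (\<circ>) Py id"])
        also have "foldr (\<circ>) (rev (map inv Pa)) id = inv (foldr (\<circ>) Pa id)"
          using inv_foldr[of Pa] Pa(2) gprop by auto
        finally have hexp: "h = inv g \<circ> (inv (foldr (\<circ>) Pa id) \<circ> foldr (\<circ>) Py id)" .
        have "inv (foldr (\<circ>) Pa id) (W ! 0) = a"
          using inv_f_f[OF bij_is_inj[OF FPa], of a] Pa(3) by simp
        moreover have "inv g a = v" using inv_f_f[OF bij_is_inj[OF gb], of v] gv by simp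
        ultimately have hv: "h (p v) = v" using Py(3) by (simp add: hexp)
        have hb: "bij h" unfolding h_def using hs_props by (intro bij_foldr) auto
        have hperm: "h permutes ?S'" unfolding h_def using hs_props by (intro permutes_foldr) auto
        have he: "permutation h \<and> evenperm h" unfolding h_def using hs_props by (intro even_foldr) auto
        define r where "r = h \<circ> p"
        have rp': "r permutes ?S'" unfolding r_def using pp hperm by (rule permutes_compose)
        have rv: "r v = v" using hv by (simp add: r_def)
        have rp: "r permutes ?S" using rp' rv S' by (elim permutes_superset) auto
        have re: "evenperm r" unfolding r_def using he pe permutes_imp_permutation[OF fin pp]
          by (simp add: evenperm_comp)
        obtain rs where rs: "length rs \<le> 3 * card ?S ^ 2" "\<forall>f\<in>set rs. gen_or_inv W f" "r = foldr (\<circ>) rs id"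
          using IH[OF rp re] by blast
        have "p = inv h \<circ> r" unfolding r_def using hb
          by (simp add: o_assoc bij_is_inj)
        also have "inv h = foldr (\<circ>) (rev (map inv hs)) id"
          unfolding h_def using hs_props by (intro inv_foldr) auto
        also have "foldr (\<circ>) (rev (map inv hs)) id \<circ> r = foldr (\<circ>) (rev (map inv hs) @ rs) id"
          using rs(3) by (simp add: foldr_comp[of "rev (map inv hs)" "foldr (\<circ>) rs id"])
        finally have pe2: "p = foldr (\<circ>) (rev (map inv hs) @ rs) id" .
        have gi: "\<forall>f\<in>set (rev (map inv hs)). gen_or_inv W f"
        proof
          fix f assume "f \<in> set (rev (map inv hs))"
          then obtain f0 where f0: "f0 \<in> set hs" "f = inv f0" by auto
          show "gen_or_inv W f"
          proof -
            have "f0 = inv g \<or> (\<exists>x\<in>set Pa. f0 = inv x) \<or> f0 \<in> set Py" using f0(1) hs_def by auto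
            then show ?thesis
            proof (elim disjE)
              assume "f0 = inv g" then show ?thesis using f0 gb gg by (simp add: gen_or_inv_def inv_inv_eq)
            next
              assume "\<exists>x\<in>set Pa. f0 = inv x"
              then obtain x where "x \<in> set Pa" "f0 = inv x" by blast
              then show ?thesis using f0 Pa(2) gprop by (auto simp: gen_or_inv_def inv_inv_eq)
            next
              assume "f0 \<in> set Py" then show ?thesis using f0 Py(2) by (auto simp: gen_or_inv_def)
            qed
          qed
        qed
        have lh: "length hs \<le> 1 + 2 * card ?S'" using Py(1) Pa(1) by (simp add: hs_def)
        have "3 * card ?S' ^ 2 = 3 * card ?S ^ 2 + 6 * card ?S + 3"
          using cS by (simp add: power2_eq_square algebra_simps)
        then have "length (rev (map inv hs) @ rs) \<le> 3 * card ?S' ^ 2" using lh rs(1) cS by simp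
        then show ?thesis using pe2 gi rs(2) by (intro exI[where x="rev (map inv hs) @ rs"]) auto
      qed
    qed
  qed
qed

theorem lemma4:
  shows "\<exists>K::nat. \<forall>(n::nat) (W::nat list) (p::nat \<Rightarrow> nat).
     set W = {1..n} \<longrightarrow>
     (\<forall>i. i + 2 < length W \<longrightarrow> distinct [W ! i, W ! (i + 1), W ! (i + 2)]) \<longrightarrow>
     p permutes {1..n} \<longrightarrow> evenperm p \<longrightarrow>
     (\<exists>fs. length fs \<le> K * n ^ 3 \<and>
           (\<forall>f\<in>set fs. f \<in> gens W \<or> (\<exists>c\<in>gens W. f = inv c)) \<and>
           p = foldr (\<circ>) fs id)"
proof (intro exI[where x=3] allI impI)
  fix n :: nat and W :: "nat list" and p :: "nat \<Rightarrow> nat"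
  assume sW: "set W = {1..n}"
    and H: "\<forall>i. i + 2 < length W \<longrightarrow> distinct [W ! i, W ! (i + 1), W ! (i + 2)]"
    and pp: "p permutes {1..n}" and pe: "evenperm p"
  have "p permutes set (take (length W) W)" using pp sW by simp
  then obtain fs where fs: "length fs \<le> 3 * card (set (take (length W) W)) ^ 2"
    "\<forall>f\<in>set fs. gen_or_inv W f" "p = foldr (\<circ>) fs id"
    using main[OF H, of "length W"] pe by blast
  have c: "card (set (take (length W) W)) = n" using sW by simp
  have "n ^ 2 \<le> n ^ 3" by (cases n) (auto simp: power_increasing)
  then have "length fs \<le> 3 * n ^ 3" using fs(1) c by simp
  then show "\<exists>fs. length fs \<le> 3 * n ^ 3 \<and>
           (\<forall>f\<in>set fs. f \<in> gens W \<or> (\<exists>c\<in>gens W. f = inv c)) \<and>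
           p = foldr (\<circ>) fs id"
    using fs(2,3) unfolding gen_or_inv_def by blast
qed

end
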